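(* There is an absolute constant $C>0$ such that the following holds. Let $n\ge 1$, $d\ge 1$, and let $\mathcal{C}:\{\pm1\}^n\times\{\pm1\}^n\to\{\pm1\}$ be a deterministic two-party communication protocol in which at most $d$ bits are communicated. Let $h:\{\pm1\}^n\to[-1,1]$ be its XOR-fiber. Then $$L_{1,1}(h)=\sum_{i=1}^n\bigl|\hat h(\{i\})\bigr|\le C\sqrt d .$$
   Context: For $x,y\in\{\pm1\}^n$, $x\odot y$ denotes the entrywise product. The XOR-fiber of $\mathcal{C}$ is $h(z)=\mathbb{E}_{\mathbf{x},\mathbf{y}}[\mathcal{C}(\mathbf{x},\mathbf{y})\mid \mathbf{x}\odot\mathbf{y}=z]$, where $\mathbf{x},\mathbf{y}$ are independent and uniform on $\{\pm1\}^n$. Every $f:\{\pm1\}^n\to\mathbb{R}$ has a unique expansion $f(x)=\sum_{S\subseteq[n]}\hat f(S)\prod_{i\in S}x_i$ with $\hat f(S)=\mathbb{E}[f(\mathbf{x})\prod_{i\in S}\mathbf{x}_i]$ for uniform $\mathbf{x}$, and the level-$k$ Fourier growth is $L_{1,k}(f)=\sum_{|S|=k}|\hat f(S)|$. *)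

theory Defs
  imports Main "HOL-Analysis.Analysis"
begin

text \<open>Points of the Boolean cube {-1,1}^n, represented as real lists of length n
  (coordinate i is x ! i, for i < n).\<close>
definition cube :: "nat \<Rightarrow> real list set" where
  "cube n = {x. length x = n \<and> set x \<subseteq> {-1, 1}}"

definition emul :: "real list \<Rightarrow> real list \<Rightarrow> real list" where
  "emul x y = map2 (*) x y"

text \<open>Deterministic two-party protocol trees: at an Alice node Alice sends the bit
  f x (a function of her input only), at a Bob node Bob sends the bit g y.\<close>
datatype proto =
    Leaf bool
  | ANode "real list \<Rightarrow> bool" proto proto
  | BNode "real list \<Rightarrow> bool" proto proto

fun run :: "proto \<Rightarrow> real list \<Rightarrow> real list \<Rightarrow> real" where
  "run (Leaf b) x y = (if b then 1 else -1)"
| "run (ANode f l r) x y = (if f x then run l x y else run r x y)"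
| "run (BNode g l r) x y = (if g y then run l x y else run r x y)"

fun cost :: "proto \<Rightarrow> nat" where
  "cost (Leaf b) = 0"
| "cost (ANode f l r) = Suc (max (cost l) (cost r))"
| "cost (BNode g l r) = Suc (max (cost l) (cost r))"

text \<open>XOR-fiber: conditional expectation of C(x,y) given x \<odot> y = z,
  for x, y independent uniform on the cube.\<close>
definition xor_fiber :: "nat \<Rightarrow> (real list \<Rightarrow> real list \<Rightarrow> real) \<Rightarrow> real list \<Rightarrow> real" where
  "xor_fiber n C z =
     (let P = {(x, y). x \<in> cube n \<and> y \<in> cube n \<and> emul x y = z}
      in (\<Sum>(x, y)\<in>P. C x y) / real (card P))"

definition fourier :: "nat \<Rightarrow> (real list \<Rightarrow> real) \<Rightarrow> nat set \<Rightarrow> real" where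
  "fourier n f S = (\<Sum>x\<in>cube n. f x * (\<Prod>i\<in>S. x ! i)) / 2 ^ n"

definition L1k :: "nat \<Rightarrow> nat \<Rightarrow> (real list \<Rightarrow> real) \<Rightarrow> real" where
  "L1k n k f = (\<Sum>S\<in>{S. S \<subseteq> {0..<n} \<and> card S = k}. \<bar>fourier n f S\<bar>)"

end

theory Submission
  imports Defs "HOL-Probability.Hoeffding"
begin

lemma finite_cube: "finite (cube n)"
proof -
  have "cube n = {xs. set xs \<subseteq> {-1,1} \<and> length xs = n}" by (auto simp: cube_def)
  thus ?thesis using finite_lists_length_eq[of "{-1,1::real}" n] by simp
qed

lemma cube_Suc: "cube (Suc n) = (\<lambda>(c,xs). c # xs) ` ({-1,1} \<times> cube n)"
proof
  show "cube (Suc n) \<subseteq> (\<lambda>(c,xs). c # xs) ` ({-1,1} \<times> cube n)"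
  proof
    fix x assume "x \<in> cube (Suc n)"
    then obtain c xs where "x = c # xs" "length xs = n" "c \<in> {-1,1}" "set xs \<subseteq> {-1,1}"
      unfolding cube_def by (cases x) auto
    thus "x \<in> (\<lambda>(c,xs). c # xs) ` ({-1,1} \<times> cube n)"
      by (auto simp: cube_def image_iff)
  qed
qed (auto simp: cube_def)

lemma sum_cmul: "(\<Sum>x\<in>A. (c::real) * g x) = c * (\<Sum>x\<in>A. g x)"
  by (rule sum_distrib_left[symmetric])

lemma cube_prod: fixes f :: "nat \<Rightarrow> real \<Rightarrow> real" shows "(\<Sum>x\<in>cube n. \<Prod>j<n. f j (x ! j)) = (\<Prod>j<n. f j 1 + f j (-1))"
proof (induction n arbitrary: f)
  case 0
  have "cube 0 = {[]}" by (auto simp: cube_def)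
  thus ?case by simp
next
  case (Suc n)
  have inj: "inj_on (\<lambda>(c,xs). c # xs) ({-1::real,1} \<times> cube n)" by (auto simp: inj_on_def)
  have "(\<Sum>x\<in>cube (Suc n). \<Prod>j<Suc n. f j (x ! j))
      = (\<Sum>p\<in>{-1::real,1} \<times> cube n. \<Prod>j<Suc n. f j ((fst p # snd p) ! j))"
    unfolding cube_Suc by (subst sum.reindex[OF inj]) (simp add: case_prod_beta)
  also have "\<dots> = (\<Sum>(c,xs)\<in>{-1::real,1} \<times> cube n. f 0 c * (\<Prod>j<n. f (Suc j) (xs ! j)))"
    by (rule sum.cong) (auto simp only: prod.lessThan_Suc_shift, auto)
  also have "\<dots> = (\<Sum>c\<in>{-1::real,1}. \<Sum>xs\<in>cube n. f 0 c * (\<Prod>j<n. f (Suc j) (xs ! j)))"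
    by (rule sum.cartesian_product[symmetric])
  also have "\<dots> = (\<Sum>c\<in>{-1::real,1}. f 0 c * (\<Prod>j<n. f (Suc j) 1 + f (Suc j) (-1)))"
    using Suc.IH[where f="\<lambda>j. f (Suc j)"] by (intro sum.cong refl) (simp add: sum_cmul)
  also have "\<dots> = (\<Prod>j<Suc n. f j 1 + f j (-1))"
    by (simp only: prod.lessThan_Suc_shift) (simp add: algebra_simps)
  finally show ?case .
qed

lemma card_cube: "card (cube n) = 2 ^ n"
proof -
  have "real (card (cube n)) = (\<Sum>x\<in>cube n. \<Prod>j<n. (\<lambda>j (v::real). 1::real) j (x ! j))" by simp
  also have "\<dots> = 2 ^ n" by (subst cube_prod) simp
  finally show ?thesis by (metis of_nat_eq_of_nat_power_cancel_iff of_nat_numeral)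
qed

lemma cube_nth: "x \<in> cube n \<Longrightarrow> i < n \<Longrightarrow> x ! i = 1 \<or> x ! i = -1"
  unfolding cube_def using nth_mem by fastforce

lemma cube_nth_sq: "x \<in> cube n \<Longrightarrow> i < n \<Longrightarrow> (x ! i)^2 = 1"
  using cube_nth by fastforce

lemma cosh_bound: "exp (u::real) + exp (-u) \<le> 2 * exp (u^2/2)"
proof -
  have key: "exp w + exp (-w) \<le> 2 * exp (w^2/2)" if "w \<ge> 0" for w :: real
  proof -
    have "ln (1 + (1/2) * (exp (2*w) - 1)) - w \<le> (2*w)^2/8"
      using Hoeffdings_lemma_aux[of "2*w" "1/2"] that by simp
    hence "ln ((1 + exp (2*w))/2) \<le> w^2/2 + w" by (simp add: power2_eq_square field_simps)
    hence "(1 + exp (2*w))/2 \<le> exp (w^2/2 + w)"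
      by (metis add_pos_pos divide_pos_pos exp_gt_zero exp_le_cancel_iff exp_ln zero_less_one zero_less_numeral)
    hence "(1 + exp (2*w)) * exp (-w) \<le> 2 * exp (w^2/2 + w) * exp (-w)" by simp
    moreover have "(1 + exp (2*w)) * exp (-w) = exp w + exp (-w)"
      by (simp add: algebra_simps flip: exp_add)
    moreover have "exp (w^2/2 + w) * exp (-w) = exp (w^2/2)" by (simp flip: exp_add)
    ultimately show ?thesis by simp
  qed
  show ?thesis
  proof (cases "u \<ge> 0")
    case True thus ?thesis using key by simp
  next
    case False thus ?thesis using key[of "-u"] by simp
  qed
qed

definition avg :: "'a set \<Rightarrow> ('a \<Rightarrow> real) \<Rightarrow> real" where
  "avg A f = (\<Sum>x\<in>A. f x) / real (card A)"
definition vr :: "'a set \<Rightarrow> ('a \<Rightarrow> real) \<Rightarrow> real" where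
  "vr A f = avg A (\<lambda>x. (f x - avg A f)^2)"
definition mn :: "real list set \<Rightarrow> nat \<Rightarrow> real" where
  "mn A i = avg A (\<lambda>x. x ! i)"
definition lin :: "nat \<Rightarrow> (nat \<Rightarrow> real) \<Rightarrow> real list \<Rightarrow> real" where
  "lin n c x = (\<Sum>i<n. c i * x ! i)"
definition ip :: "nat \<Rightarrow> (nat \<Rightarrow> real) \<Rightarrow> (nat \<Rightarrow> real) \<Rightarrow> real" where
  "ip n u v = (\<Sum>i<n. u i * v i)"

lemma avg_add: "avg A (\<lambda>x. f x + g x) = avg A f + avg A g"
  by (simp add: avg_def sum.distrib add_divide_distrib)
lemma avg_diff: "avg A (\<lambda>x. f x - g x) = avg A f - avg A g"
  by (simp add: avg_def sum_subtractf diff_divide_distrib)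
lemma avg_cmul: "avg A (\<lambda>x. c * f x) = c * avg A f"
  by (simp add: avg_def sum_distrib_left[symmetric])
lemma avg_const: "finite A \<Longrightarrow> A \<noteq> {} \<Longrightarrow> avg A (\<lambda>x. c) = c"
  by (simp add: avg_def)
lemma avg_sum: "avg A (\<lambda>x. \<Sum>i\<in>I. f i x) = (\<Sum>i\<in>I. avg A (f i))"
  by (simp add: avg_def sum.swap[of _ I] sum_divide_distrib)

lemma avg_lc3: "avg A (\<lambda>x. a * f x + b * g x + c * h x) = a * avg A f + b * avg A g + c * avg A h"
  by (simp only: avg_add avg_cmul)

lemma vr_alt: assumes "finite A" "A \<noteq> {}" shows "vr A f = avg A (\<lambda>x. (f x)^2) - (avg A f)^2"
proof -
  define m where "m = avg A f"
  have "vr A f = avg A (\<lambda>x. 1 * (f x)^2 + (-2 * m) * f x + m^2 * 1)"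
    unfolding vr_def m_def by (rule arg_cong[where f="avg A"]) (simp add: fun_eq_iff power2_diff)
  also have "\<dots> = avg A (\<lambda>x. (f x)^2) - m^2"
    by (simp only: avg_lc3 avg_const[OF assms]) (simp add: m_def power2_eq_square)
  finally show ?thesis by (simp add: m_def)
qed

lemma vr_nonneg: "vr A f \<ge> 0"
  unfolding vr_def avg_def by (intro divide_nonneg_nonneg sum_nonneg) auto

lemma avg_part: assumes "finite A0" shows "card A0 / N * avg A0 f = (\<Sum>x\<in>A0. f x) / N"
  using assms by (cases "A0 = {}") (auto simp: avg_def)

lemma avg_union:
  assumes "finite A0" "finite A1" "A0 \<inter> A1 = {}"
  shows "avg (A0 \<union> A1) f = (card A0 / card (A0 \<union> A1)) * avg A0 f + (card A1 / card (A0 \<union> A1)) * avg A1 f"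
  unfolding avg_part[OF assms(1)] avg_part[OF assms(2)]
  using assms by (simp add: avg_def sum.union_disjoint add_divide_distrib)

lemma avg_lin: "avg A (lin n c) = ip n c (mn A)"
  unfolding lin_def ip_def mn_def by (simp add: avg_sum avg_cmul)

lemma vr_mix:
  assumes "finite B" "B \<noteq> {}" "q0 + q1 = 1"
  shows "q0 * vr B u0 + q1 * vr B u1 = vr B (\<lambda>y. q0 * u0 y + q1 * u1 y) + q0 * q1 * vr B (\<lambda>y. u0 y - u1 y)"
proof -
  have q1: "q1 = 1 - q0" using assms by simp
  have e1: "avg B (\<lambda>y. (q0 * u0 y + q1 * u1 y)^2) = q0^2 * avg B (\<lambda>y. (u0 y)^2) + (2*q0*q1) * avg B (\<lambda>y. u0 y * u1 y) + q1^2 * avg B (\<lambda>y. (u1 y)^2)"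
    by (subst avg_lc3[symmetric]) (rule arg_cong[where f="avg B"], simp add: fun_eq_iff power2_eq_square algebra_simps)
  have e2: "avg B (\<lambda>y. (u0 y - u1 y)^2) = 1 * avg B (\<lambda>y. (u0 y)^2) + (-2) * avg B (\<lambda>y. u0 y * u1 y) + 1 * avg B (\<lambda>y. (u1 y)^2)"
    by (subst avg_lc3[symmetric]) (rule arg_cong[where f="avg B"], simp add: fun_eq_iff power2_eq_square algebra_simps)
  have e3: "avg B (\<lambda>y. q0 * u0 y + q1 * u1 y) = q0 * avg B u0 + q1 * avg B u1"
    by (simp only: avg_add avg_cmul)
  have e4: "avg B (\<lambda>y. u0 y - u1 y) = avg B u0 - avg B u1"
    by (simp only: avg_diff)
  show ?thesis
    unfolding vr_alt[OF assms(1,2)] e1 e2 e3 e4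
    by (simp add: q1 power2_eq_square algebra_simps)
qed

lemma vr_union:
  assumes "finite A0" "finite A1" "A0 \<inter> A1 = {}" "A0 \<noteq> {}" "A1 \<noteq> {}"
  defines "q0 \<equiv> card A0 / card (A0 \<union> A1)" and "q1 \<equiv> card A1 / card (A0 \<union> A1)"
  shows "vr (A0 \<union> A1) f = q0 * vr A0 f + q1 * vr A1 f + q0 * q1 * (avg A0 f - avg A1 f)^2"
proof -
  have N: "card (A0 \<union> A1) = card A0 + card A1" using assms card_Un_disjoint by blast
  have pos: "card A0 > 0" "card A1 > 0" using assms by (auto simp: card_gt_0_iff)
  have q1: "q1 = 1 - q0" unfolding q0_def q1_def N using pos by (simp add: field_simps)
  have u1: "avg (A0 \<union> A1) f = q0 * avg A0 f + q1 * avg A1 f"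
    unfolding q0_def q1_def by (rule avg_union[OF assms(1-3)])
  have u2: "avg (A0 \<union> A1) (\<lambda>x. (f x)^2) = q0 * avg A0 (\<lambda>x. (f x)^2) + q1 * avg A1 (\<lambda>x. (f x)^2)"
    unfolding q0_def q1_def by (rule avg_union[OF assms(1-3)])
  have v: "vr (A0 \<union> A1) f = avg (A0 \<union> A1) (\<lambda>x. (f x)^2) - (avg (A0 \<union> A1) f)^2"
    "vr A0 f = avg A0 (\<lambda>x. (f x)^2) - (avg A0 f)^2" "vr A1 f = avg A1 (\<lambda>x. (f x)^2) - (avg A1 f)^2"
    using assms(1,2,4,5) by (auto intro!: vr_alt)
  show ?thesis unfolding v u1 u2
    by (simp add: q1 power2_eq_square algebra_simps)
qed

definition Zf :: "nat \<Rightarrow> (nat \<Rightarrow> real) \<Rightarrow> real list set \<Rightarrow> real list set \<Rightarrow> real" where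
  "Zf n s A B = (\<Sum>i<n. s i * mn A i * mn B i)"
definition Phi :: "nat \<Rightarrow> (nat \<Rightarrow> real) \<Rightarrow> real list set \<Rightarrow> real list set \<Rightarrow> real" where
  "Phi n s A B = vr A (lin n (\<lambda>i. s i * mn B i))"
definition nq :: "nat \<Rightarrow> real list set \<Rightarrow> real" where
  "nq n A = ip n (mn A) (mn A)"
definition Lg :: "nat \<Rightarrow> real list set \<Rightarrow> real" where
  "Lg n A = ln (2 ^ n / real (card A))"
definition G :: "nat \<Rightarrow> (nat \<Rightarrow> real) \<Rightarrow> real list set \<Rightarrow> real list set \<Rightarrow> real" where
  "G n s A B = (Zf n s A B)^2 + Phi n s A B + Phi n s B A - 32 * (nq n A + nq n B) + 64 * (Lg n A + Lg n B)"
definition Hb :: "real \<Rightarrow> real" where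
  "Hb q = q * ln (1 / q) + (1 - q) * ln (1 / (1 - q))"
definition clean :: "nat \<Rightarrow> real list set \<Rightarrow> bool" where
  "clean n A = (\<forall>c. vr A (lin n c) \<le> 16 * ip n c c)"

lemma Zf_sym: "Zf n s A B = Zf n s B A"
  unfolding Zf_def by (simp add: ac_simps)

lemma G_sym: "G n s A B = G n s B A"
  unfolding G_def by (simp add: Zf_sym ac_simps)

lemma step_A:
  assumes fin: "finite A0" "finite A1" "finite B" and ne: "A0 \<noteq> {}" "A1 \<noteq> {}" "B \<noteq> {}"
    and disj: "A0 \<inter> A1 = {}" and cl: "clean n B" and s: "\<forall>i<n. (s i)^2 = 1"
  defines "q0 \<equiv> card A0 / card (A0 \<union> A1)" and "q1 \<equiv> card A1 / card (A0 \<union> A1)"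
  shows "q0 * G n s A0 B + q1 * G n s A1 B \<le> G n s (A0 \<union> A1) B
           - 16 * q0 * q1 * ip n (\<lambda>i. mn A0 i - mn A1 i) (\<lambda>i. mn A0 i - mn A1 i) + 64 * Hb q0"
proof -
  define A where "A = A0 \<union> A1"
  define D where "D = (\<lambda>i. mn A0 i - mn A1 i)"
  have N: "card A = card A0 + card A1" unfolding A_def using fin disj card_Un_disjoint by blast
  have pos: "card A0 > 0" "card A1 > 0" using fin ne by (auto simp: card_gt_0_iff)
  have q1: "q1 = 1 - q0" unfolding q0_def q1_def A_def[symmetric] N using pos by (simp add: field_simps)
  have q0pos: "q0 > 0" "q1 > 0" unfolding q0_def q1_def A_def[symmetric] N using pos by auto
  have mnA: "mn A i = q0 * mn A0 i + q1 * mn A1 i" for i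
    unfolding mn_def q0_def q1_def A_def by (rule avg_union[OF fin(1,2) disj])
  define Z0 where "Z0 = Zf n s A0 B"
  define Z1 where "Z1 = Zf n s A1 B"
  have hZe: "Zf n s A B = q0 * Z0 + q1 * Z1"
    unfolding Z0_def Z1_def Zf_def mnA by (simp add: sum_distrib_left sum.distrib[symmetric] algebra_simps)
  have hZ: "q0 * Z0^2 + q1 * Z1^2 = (Zf n s A B)^2 + q0 * q1 * (Z0 - Z1)^2"
    unfolding hZe q1 by (simp add: power2_eq_square algebra_simps)
  have avZ: "avg A' (lin n (\<lambda>i. s i * mn B i)) = Zf n s A' B" for A'
    unfolding avg_lin Zf_def ip_def by (simp add: ac_simps)
  have hP1: "Phi n s A B = q0 * Phi n s A0 B + q1 * Phi n s A1 B + q0 * q1 * (Z0 - Z1)^2"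
    unfolding Phi_def A_def q0_def q1_def
    by (subst vr_union[OF fin(1,2) disj ne(1,2)]) (simp add: avZ Z0_def Z1_def A_def)
  have lmix: "(\<lambda>y. q0 * lin n (\<lambda>i. s i * mn A0 i) y + q1 * lin n (\<lambda>i. s i * mn A1 i) y) = lin n (\<lambda>i. s i * mn A i)"
    unfolding lin_def mnA by (simp add: fun_eq_iff sum_distrib_left sum.distrib[symmetric] algebra_simps)
  have ldiff: "(\<lambda>y. lin n (\<lambda>i. s i * mn A0 i) y - lin n (\<lambda>i. s i * mn A1 i) y) = lin n (\<lambda>i. s i * D i)"
    unfolding lin_def D_def by (simp add: fun_eq_iff sum_subtractf[symmetric] algebra_simps)
  have ipD: "ip n (\<lambda>i. s i * D i) (\<lambda>i. s i * D i) = ip n D D"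
    unfolding ip_def by (rule sum.cong) (use s in \<open>auto simp: power2_eq_square algebra_simps\<close>)
  have hP2: "q0 * Phi n s B A0 + q1 * Phi n s B A1 \<le> Phi n s B A + 16 * q0 * q1 * ip n D D"
  proof -
    have "q0 * Phi n s B A0 + q1 * Phi n s B A1 = Phi n s B A + q0 * q1 * vr B (lin n (\<lambda>i. s i * D i))"
      unfolding Phi_def using vr_mix[OF fin(3) ne(3), of q0 q1] q1 lmix ldiff by simp
    moreover have "vr B (lin n (\<lambda>i. s i * D i)) \<le> 16 * ip n D D"
      using cl ipD unfolding clean_def by metis
    moreover have "q0 * q1 * vr B (lin n (\<lambda>i. s i * D i)) \<le> q0 * q1 * (16 * ip n D D)"
      using q0pos calculation(2) by (intro mult_left_mono) auto
    ultimately show ?thesis by (simp add: algebra_simps)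
  qed
  have hN: "q0 * nq n A0 + q1 * nq n A1 = nq n A + q0 * q1 * ip n D D"
  proof -
    have "(\<Sum>i<n. q0 * (mn A0 i * mn A0 i) + q1 * (mn A1 i * mn A1 i))
        = (\<Sum>i<n. mn A i * mn A i + q0 * q1 * (D i * D i))"
      by (rule sum.cong) (simp_all add: mnA D_def q1 algebra_simps)
    thus ?thesis unfolding nq_def ip_def by (simp add: sum.distrib sum_distrib_left)
  qed
  have hL: "q0 * Lg n A0 + q1 * Lg n A1 = Lg n A + Hb q0"
  proof -
    have l: "Lg n A' = Lg n A + ln (1 / (card A' / card A))" if "card A' > 0" for A'
      unfolding Lg_def using that N pos
      by (simp add: ln_div ln_mult field_simps)
    have l0: "Lg n A0 = Lg n A + ln (1/q0)" using l[OF pos(1)] unfolding q0_def A_def .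
    have l1: "Lg n A1 = Lg n A + ln (1/(1-q0))" using l[OF pos(2)] q1 unfolding q1_def A_def by simp
    show ?thesis unfolding l0 l1 Hb_def q1 by (simp add: algebra_simps)
  qed
  have expand: "q0 * G n s A0 B + q1 * G n s A1 B =
      (q0 * Z0^2 + q1 * Z1^2) + (q0 * Phi n s A0 B + q1 * Phi n s A1 B) + (q0 * Phi n s B A0 + q1 * Phi n s B A1)
      - 32 * ((q0 * nq n A0 + q1 * nq n A1) + (q0 + q1) * nq n B)
      + 64 * ((q0 * Lg n A0 + q1 * Lg n A1) + (q0 + q1) * Lg n B)"
    unfolding G_def Z0_def Z1_def by (simp add: algebra_simps)
  have q01: "q0 + q1 = 1" using q1 by simp
  have e2: "q0 * G n s A0 B + q1 * G n s A1 B = (Zf n s A B)^2 + Phi n s A B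
      + (q0 * Phi n s B A0 + q1 * Phi n s B A1) - 32 * (nq n A + q0 * q1 * ip n D D + nq n B)
      - 32 * (q0 * q1 * (Z0 - Z1)^2) + 32 * (q0 * q1 * (Z0 - Z1)^2)
      + 64 * (Lg n A + Hb q0 + Lg n B)"
    unfolding expand q01 using hZ hP1 hN hL by simp
  have gA: "G n s A B = (Zf n s A B)^2 + Phi n s A B + Phi n s B A - 32 * (nq n A + nq n B) + 64 * (Lg n A + Lg n B)"
    by (simp add: G_def)
  have "q0 * G n s A0 B + q1 * G n s A1 B \<le> G n s A B - 16 * q0 * q1 * ip n D D + 64 * Hb q0"
    unfolding e2 gA using hP2 by (simp add: algebra_simps)
  thus ?thesis unfolding A_def D_def .
qed

lemma step_B:
  assumes fin: "finite B0" "finite B1" "finite A" and ne: "B0 \<noteq> {}" "B1 \<noteq> {}" "A \<noteq> {}"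
    and disj: "B0 \<inter> B1 = {}" and cl: "clean n A" and s: "\<forall>i<n. (s i)^2 = 1"
  defines "q0 \<equiv> card B0 / card (B0 \<union> B1)" and "q1 \<equiv> card B1 / card (B0 \<union> B1)"
  shows "q0 * G n s A B0 + q1 * G n s A B1 \<le> G n s A (B0 \<union> B1)
           - 16 * q0 * q1 * ip n (\<lambda>i. mn B0 i - mn B1 i) (\<lambda>i. mn B0 i - mn B1 i) + 64 * Hb q0"
  using step_A[OF fin ne disj cl s] unfolding q0_def q1_def by (simp add: G_sym[of n s A])

lemma sum_exp_lower:
  assumes "finite A" "A \<noteq> {}"
  shows "real (card A) * exp (avg A u) \<le> (\<Sum>x\<in>A. exp (u x))"
proof -
  define m where "m = avg A u"
  have "(\<Sum>x\<in>A. exp m * (1 + (u x - m))) \<le> (\<Sum>x\<in>A. exp (u x))"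
  proof (rule sum_mono)
    fix x assume "x \<in> A"
    have "exp m * (1 + (u x - m)) \<le> exp m * exp (u x - m)"
      by (intro mult_left_mono exp_ge_add_one_self) auto
    thus "exp m * (1 + (u x - m)) \<le> exp (u x)" by (simp add: exp_diff)
  qed
  moreover have "(\<Sum>x\<in>A. exp m * (1 + (u x - m))) = exp m * (card A + (\<Sum>x\<in>A. u x) - card A * m)"
    by (simp add: sum_distrib_left[symmetric] sum.distrib sum_subtractf)
  moreover have "(\<Sum>x\<in>A. u x) = card A * m" using assms by (simp add: m_def avg_def)
  ultimately show ?thesis by (simp add: m_def mult.commute)
qed

lemma level1:
  assumes "A \<subseteq> cube n" "A \<noteq> {}"
  shows "nq n A \<le> 2 * Lg n A"
proof -
  have fin: "finite A" using assms finite_cube finite_subset by blast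
  define a where "a = mn A"
  have e1: "(\<Sum>x\<in>cube n. exp (lin n a x)) = (\<Prod>j<n. exp (a j * 1) + exp (a j * (-1)))"
  proof -
    have "(\<Sum>x\<in>cube n. exp (lin n a x)) = (\<Sum>x\<in>cube n. \<Prod>j<n. (\<lambda>j v. exp (a j * v)) j (x ! j))"
      unfolding lin_def by (simp add: exp_sum)
    also have "\<dots> = (\<Prod>j<n. exp (a j * 1) + exp (a j * (-1)))" by (rule cube_prod)
    finally show ?thesis .
  qed
  have e2: "(\<Prod>j<n. exp (a j * 1) + exp (a j * (-1))) \<le> (\<Prod>j<n. 2 * exp ((a j)^2/2))"
    by (intro prod_mono) (auto intro: add_nonneg_nonneg simp: cosh_bound)
  have e3: "(\<Prod>j<n. 2 * exp ((a j)^2/2)) = 2^n * exp (nq n A / 2)"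
    unfolding nq_def ip_def a_def by (simp add: prod.distrib exp_sum[symmetric] sum_divide_distrib power2_eq_square)
  have e4: "(\<Sum>x\<in>A. exp (lin n a x)) \<le> (\<Sum>x\<in>cube n. exp (lin n a x))"
    by (rule sum_mono2[OF finite_cube assms(1)]) auto
  have e5: "avg A (lin n a) = nq n A" unfolding avg_lin nq_def a_def ..
  have "real (card A) * exp (nq n A) \<le> 2^n * exp (nq n A / 2)"
    using sum_exp_lower[OF fin assms(2), of "lin n a", unfolded e5] e1 e2 e3 e4 by linarith
  hence "real (card A) * exp (nq n A / 2) \<le> 2^n"
    by (smt (verit, best) exp_add exp_gt_zero field_sum_of_halves mult.assoc mult_le_cancel_right_pos)
  moreover have "card A > 0" using fin assms(2) by (simp add: card_gt_0_iff)
  ultimately have "exp (nq n A / 2) \<le> 2^n / real (card A)" by (simp add: field_simps)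
  hence "ln (exp (nq n A / 2)) \<le> ln (2^n / real (card A))"
    using \<open>card A > 0\<close> by (subst ln_le_cancel_iff) auto
  hence "nq n A / 2 \<le> ln (2^n / real (card A))" by simp
  thus ?thesis unfolding Lg_def by simp
qed

lemma rank_sum:
  fixes W :: "'a \<Rightarrow> real" and g :: "nat \<Rightarrow> real"
  assumes "finite A" and mono: "\<And>i j. 1 \<le> i \<Longrightarrow> i \<le> j \<Longrightarrow> g j \<le> g i"
  shows "(\<Sum>x\<in>A. g (card {y\<in>A. W x \<le> W y})) \<le> (\<Sum>k=1..card A. g k)"
  using assms(1)
proof (induction "card A" arbitrary: A)
  case 0
  hence "A = {}" by simp
  thus ?case by simp
next
  case (Suc m A)
  hence ne: "A \<noteq> {}" by auto
  have "Min (W ` A) \<in> W ` A" using Suc.prems ne by (intro Min_in) auto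
  then obtain x0 where x0: "x0 \<in> A" "W x0 = Min (W ` A)" by auto
  have x0min: "\<forall>y\<in>A. W x0 \<le> W y" using x0 Suc.prems by simp
  define A' where "A' = A - {x0}"
  have finA': "finite A'" using Suc.prems by (simp add: A'_def)
  have cA': "m = card A'" using Suc.hyps(2) x0(1) Suc.prems by (simp add: A'_def)
  have A: "A = insert x0 A'" "x0 \<notin> A'" using x0(1) by (auto simp: A'_def)
  have first: "card {y\<in>A. W x0 \<le> W y} = Suc m"
  proof -
    have "{y\<in>A. W x0 \<le> W y} = A" using x0min by auto
    thus ?thesis using Suc.hyps(2) by simp
  qed
  have rest: "g (card {y\<in>A. W x \<le> W y}) \<le> g (card {y\<in>A'. W x \<le> W y})" if "x \<in> A'" for x
  proof (rule mono)
    have "{y\<in>A'. W x \<le> W y} \<noteq> {}" using that by auto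
    moreover have "finite {y\<in>A'. W x \<le> W y}" using finA' by simp
    ultimately have "card {y\<in>A'. W x \<le> W y} > 0" by (simp add: card_gt_0_iff)
    thus "1 \<le> card {y\<in>A'. W x \<le> W y}" by simp
    show "card {y\<in>A'. W x \<le> W y} \<le> card {y\<in>A. W x \<le> W y}"
      by (rule card_mono) (use Suc.prems in \<open>auto simp: A'_def\<close>)
  qed
  have "(\<Sum>x\<in>A. g (card {y\<in>A. W x \<le> W y})) = g (Suc m) + (\<Sum>x\<in>A'. g (card {y\<in>A. W x \<le> W y}))"
    unfolding sum.remove[OF Suc.prems x0(1)] first A'_def ..
  also have "\<dots> \<le> g (Suc m) + (\<Sum>x\<in>A'. g (card {y\<in>A'. W x \<le> W y}))"
    using rest by (intro add_left_mono sum_mono) auto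
  also have "\<dots> \<le> g (Suc m) + (\<Sum>k=1..m. g k)"
    using Suc.hyps(1)[OF cA' finA'] cA' by simp
  also have "\<dots> = (\<Sum>k=1..Suc m. g k)" by simp
  finally show ?case using Suc.hyps(2) by simp
qed

lemma pow_le_exp_fact: "real N ^ N \<le> exp (real N) * fact N"
proof (induction N)
  case 0 thus ?case by simp
next
  case (Suc N)
  have b: "(real N + 1) ^ N \<le> exp 1 * real N ^ N"
  proof (cases "N = 0")
    case True thus ?thesis by simp
  next
    case False
    have "(1 + 1 / real N) ^ N \<le> exp 1"
      using exp_ge_one_plus_x_over_n_power_n[where x=1 and n=N] False by simp
    moreover have "(real N + 1) ^ N = (1 + 1 / real N) ^ N * real N ^ N"
      using False by (simp add: field_simps power_mult_distrib[symmetric])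
    ultimately show ?thesis by (simp add: mult_right_mono)
  qed
  have "real (Suc N) ^ Suc N = (real N + 1) * (real N + 1) ^ N"
    unfolding power_Suc by (simp only: of_nat_Suc add.commute)
  also have "\<dots> \<le> (real N + 1) * (exp 1 * real N ^ N)"
    by (rule mult_left_mono[OF b]) simp
  also have "\<dots> \<le> (real N + 1) * (exp 1 * (exp (real N) * fact N))"
    by (intro mult_left_mono Suc.IH) auto
  also have "\<dots> = exp (real (Suc N)) * fact (Suc N)"
    by (simp add: exp_add algebra_simps)
  finally show ?case .
qed

lemma sum_g_bound:
  assumes "N \<ge> 1"
  shows "(\<Sum>k=1..N. 1 + ln (real N) - ln (real k)) \<le> 2 * real N"
proof -
  have "(\<Sum>k=1..N. ln (real k)) = ln (\<Prod>k=1..N. real k)"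
    by (subst ln_prod) auto
  also have "(\<Prod>k=1..N. real k) = fact N" by (simp add: fact_prod)
  finally have lf: "(\<Sum>k=1..N. ln (real k)) = ln (fact N)" .
  have "real N * ln (real N) = ln (real N ^ N)" using assms by (simp add: ln_realpow)
  also have "\<dots> \<le> ln (exp (real N) * fact N)"
    using pow_le_exp_fact[of N] assms by (subst ln_le_cancel_iff) auto
  also have "\<dots> = real N + ln (fact N)" by (simp add: ln_mult)
  finally have "real N * ln (real N) \<le> real N + ln (fact N)" .
  moreover have "(\<Sum>k=1..N. 1 + ln (real N) - ln (real k)) = real N + real N * ln (real N) - (\<Sum>k=1..N. ln (real k))"
    by (simp add: sum.distrib sum_subtractf distrib_left)
  ultimately show ?thesis unfolding lf by simp
qed

lemma avg_neg: "avg A (\<lambda>x. - f x) = - avg A f"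
  by (simp add: avg_def sum_negf)

lemma avg_ge: assumes "finite A" "A \<noteq> {}" "\<And>x. x \<in> A \<Longrightarrow> w \<le> f x" shows "w \<le> avg A f"
proof -
  have "(\<Sum>x\<in>A. w) \<le> (\<Sum>x\<in>A. f x)" using assms(3) by (rule sum_mono)
  moreover have "card A > 0" using assms by (simp add: card_gt_0_iff)
  ultimately show ?thesis by (simp add: avg_def field_simps)
qed

lemma tail_split:
  fixes W :: "'a \<Rightarrow> real"
  assumes fin: "finite A" and ne: "A \<noteq> {}" and sum0: "(\<Sum>x\<in>A. W x) = 0"
    and big: "(\<Sum>x\<in>A. (max (W x) 0)^2) > 8 * real (card A)"
  shows "\<exists>A0. A0 \<subseteq> A \<and> A0 \<noteq> {} \<and> A - A0 \<noteq> {} \<and>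
     4 * Hb (card A0 / card A) \<le> (card A0 / card A) * (card (A - A0) / card A) * (avg A0 W - avg (A - A0) W)^2"
proof -
  define N where "N = card A"
  have N1: "N \<ge> 1" using fin ne by (simp add: N_def Suc_le_eq card_gt_0_iff)
  define r where "r x = card {y\<in>A. W x \<le> W y}" for x
  define g where "g k = 1 + ln (real N) - ln (real k)" for k :: nat
  have r1: "1 \<le> r x" "r x \<le> N" if "x \<in> A" for x
  proof -
    have "{y\<in>A. W x \<le> W y} \<noteq> {}" using that by auto
    moreover have "finite {y\<in>A. W x \<le> W y}" using fin by simp
    ultimately have "card {y\<in>A. W x \<le> W y} > 0" by (simp add: card_gt_0_iff)
    thus "1 \<le> r x" by (simp add: r_def)
    show "r x \<le> N" unfolding r_def N_def by (rule card_mono[OF fin]) auto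
  qed
  have gpos: "g (r x) \<ge> 1" if "x \<in> A" for x
  proof -
    have "ln (real (r x)) \<le> ln (real N)" using r1[OF that] by (subst ln_le_cancel_iff) auto
    thus ?thesis by (simp add: g_def)
  qed
  have "\<exists>x\<in>A. W x > 0 \<and> 4 * g (r x) \<le> (W x)^2"
  proof (rule ccontr)
    assume "\<not> ?thesis"
    hence h: "(max (W x) 0)^2 \<le> 4 * g (r x)" if "x \<in> A" for x
      using gpos[OF that] that by (cases "W x > 0") (auto simp: not_le max_def)
    have "(\<Sum>x\<in>A. (max (W x) 0)^2) \<le> (\<Sum>x\<in>A. 4 * g (r x))" using h by (rule sum_mono)
    also have "\<dots> = 4 * (\<Sum>x\<in>A. g (card {y\<in>A. W x \<le> W y}))" by (simp add: sum_distrib_left r_def)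
    also have "\<dots> \<le> 4 * (\<Sum>k=1..card A. g k)"
    proof -
      have "(\<Sum>x\<in>A. g (card {y\<in>A. W x \<le> W y})) \<le> (\<Sum>k=1..card A. g k)"
        by (rule rank_sum[OF fin]) (auto simp: g_def)
      thus ?thesis by simp
    qed
    also have "\<dots> \<le> 4 * (2 * real N)" using sum_g_bound[OF N1] by (simp add: g_def N_def)
    finally show False using big by (simp add: N_def)
  qed
  then obtain x0 where x0: "x0 \<in> A" "W x0 > 0" "4 * g (r x0) \<le> (W x0)^2" by blast
  define w where "w = W x0"
  define A0 where "A0 = {y\<in>A. w \<le> W y}"
  define A1 where "A1 = A - A0"
  have A0sub: "A0 \<subseteq> A" by (auto simp: A0_def)
  have finA0: "finite A0" "finite A1" using fin by (auto simp: A0_def A1_def)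
  have cA0: "card A0 = r x0" by (simp add: A0_def r_def w_def)
  have A0ne: "A0 \<noteq> {}" using x0 by (auto simp: A0_def w_def)
  have A1ne: "A1 \<noteq> {}"
  proof
    assume "A1 = {}"
    hence "\<forall>y\<in>A. W y > 0" using x0(2) by (auto simp: A1_def A0_def w_def)
    hence "(\<Sum>x\<in>A. W x) > 0" using fin ne by (intro sum_pos) auto
    thus False using sum0 by simp
  qed
  have AU: "A = A0 \<union> A1" "A0 \<inter> A1 = {}" using A0sub by (auto simp: A1_def)
  have cN: "card A0 + card A1 = N" unfolding N_def using AU finA0 by (metis card_Un_disjoint)
  have p0: "card A0 > 0" "card A1 > 0" using A0ne A1ne finA0 by (auto simp: card_gt_0_iff)
  define q0 where "q0 = card A0 / N"
  define q1 where "q1 = card A1 / N"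
  have q1: "q1 = 1 - q0" "q0 > 0" "q1 > 0" "q1 \<le> 1"
    unfolding q0_def q1_def using cN p0 by (auto simp: field_simps)
  define m0 where "m0 = avg A0 W"
  define m1 where "m1 = avg A1 W"
  have m0w: "w \<le> m0" unfolding m0_def by (rule avg_ge[OF finA0(1) A0ne]) (auto simp: A0_def)
  have "avg A W = 0" using sum0 by (simp add: avg_def)
  hence bal: "q0 * m0 + q1 * m1 = 0"
    using avg_union[OF finA0 AU(2), of W] AU(1) by (simp add: q0_def q1_def m0_def m1_def N_def)
  have "(m0 - m1) * q1 = m0 * (q0 + q1) - (q0 * m0 + q1 * m1)" by (simp add: algebra_simps)
  hence diff: "(m0 - m1) * q1 = m0" using bal q1(1) by simp
  have d2: "m0 - m1 = m0 / q1" using diff q1(3) by (simp add: field_simps)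
  have "q0 * q1 * (m0 - m1)^2 = q0 * m0^2 / q1"
    unfolding d2 using q1(3) by (simp add: power2_eq_square field_simps)
  also have "\<dots> \<ge> q0 * m0^2"
  proof -
    have "q0 * m0^2 * q1 \<le> q0 * m0^2" using q1 by (intro mult_left_le) auto
    thus ?thesis using q1(3) by (simp add: field_simps)
  qed
  finally have s1: "q0 * m0^2 \<le> q0 * q1 * (m0 - m1)^2" .
  have "w^2 \<le> m0^2" using m0w x0(2) unfolding w_def by (intro power_mono) auto
  hence s2: "q0 * w^2 \<le> q0 * m0^2" using q1(2) by (intro mult_left_mono) auto
  have gq: "g (r x0) = 1 + ln (1 / q0)"
    unfolding g_def q0_def cA0[symmetric] using p0 N1 by (simp add: ln_div)
  have hb: "Hb q0 \<le> q0 * g (r x0)"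
  proof -
    have "ln (1 / q1) \<le> 1 / q1 - 1" using q1(3) by (intro ln_le_minus_one) auto
    hence "q1 * ln (1 / q1) \<le> q1 * (1 / q1 - 1)" using q1(3) by (intro mult_left_mono) auto
    also have "\<dots> = q0" using q1 by (simp add: right_diff_distrib)
    finally show ?thesis unfolding Hb_def gq q1(1)[symmetric] by (simp add: algebra_simps)
  qed
  have "4 * Hb q0 \<le> q0 * q1 * (m0 - m1)^2"
  proof -
    have "4 * Hb q0 \<le> q0 * (4 * g (r x0))" using hb by simp
    also have "\<dots> \<le> q0 * w^2" using x0(3) q1(2) unfolding w_def by (intro mult_left_mono) auto
    finally show ?thesis using s1 s2 by simp
  qed
  thus ?thesis
    using A0sub A0ne A1ne unfolding q0_def q1_def m0_def m1_def A1_def N_def by blast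
qed

lemma tail_split2:
  fixes W :: "'a \<Rightarrow> real"
  assumes fin: "finite A" and ne: "A \<noteq> {}" and sum0: "(\<Sum>x\<in>A. W x) = 0"
    and big: "(\<Sum>x\<in>A. (W x)^2) > 16 * real (card A)"
  shows "\<exists>A0. A0 \<subseteq> A \<and> A0 \<noteq> {} \<and> A - A0 \<noteq> {} \<and>
     4 * Hb (card A0 / card A) \<le> (card A0 / card A) * (card (A - A0) / card A) * (avg A0 W - avg (A - A0) W)^2"
proof -
  have sp: "(W x)^2 = (max (W x) 0)^2 + (max (- W x) 0)^2" for x
    by (cases "W x \<ge> 0") (auto simp: max_def)
  have "(\<Sum>x\<in>A. (W x)^2) = (\<Sum>x\<in>A. (max (W x) 0)^2) + (\<Sum>x\<in>A. (max (- W x) 0)^2)"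
    unfolding sp by (simp add: sum.distrib)
  hence "(\<Sum>x\<in>A. (max (W x) 0)^2) > 8 * real (card A) \<or> (\<Sum>x\<in>A. (max (- W x) 0)^2) > 8 * real (card A)"
    using big by linarith
  thus ?thesis
  proof
    assume "(\<Sum>x\<in>A. (max (W x) 0)^2) > 8 * real (card A)"
    thus ?thesis by (rule tail_split[OF fin ne sum0])
  next
    assume h: "(\<Sum>x\<in>A. (max (- W x) 0)^2) > 8 * real (card A)"
    have s: "(\<Sum>x\<in>A. - W x) = 0" using sum0 by (simp add: sum_negf)
    obtain A0 where "A0 \<subseteq> A \<and> A0 \<noteq> {} \<and> A - A0 \<noteq> {} \<and>
     4 * Hb (card A0 / card A) \<le> (card A0 / card A) * (card (A - A0) / card A) * (avg A0 (\<lambda>x. - W x) - avg (A - A0) (\<lambda>x. - W x))^2"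
      using tail_split[OF fin ne s h] by blast
    moreover have "(avg A0 (\<lambda>x. - W x) - avg (A - A0) (\<lambda>x. - W x))^2 = (avg A0 W - avg (A - A0) W)^2"
      by (simp add: avg_neg power2_eq_square algebra_simps)
    ultimately show ?thesis by auto
  qed
qed

lemma unclean_split:
  assumes fin: "finite A" and ne: "A \<noteq> {}" and uc: "\<not> clean n A"
  shows "\<exists>A0. A0 \<subseteq> A \<and> A0 \<noteq> {} \<and> A - A0 \<noteq> {} \<and>
     4 * Hb (card A0 / card A) \<le> (card A0 / card A) * (card (A - A0) / card A)
        * ip n (\<lambda>i. mn A0 i - mn (A - A0) i) (\<lambda>i. mn A0 i - mn (A - A0) i)"
proof -
  obtain c where c: "vr A (lin n c) > 16 * ip n c c" using uc by (auto simp: clean_def not_le)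
  have ipc: "ip n c c \<ge> 0" unfolding ip_def by (intro sum_nonneg) auto
  have ipcpos: "ip n c c > 0"
  proof (rule ccontr)
    assume "\<not> ip n c c > 0"
    hence "ip n c c = 0" using ipc by simp
    hence "\<forall>i\<in>{..<n}. c i * c i = 0" unfolding ip_def by (subst sum_nonneg_eq_0_iff[symmetric]) auto
    hence "lin n c = (\<lambda>x. 0)" by (simp add: lin_def fun_eq_iff)
    hence "vr A (lin n c) = 0" by (simp add: vr_def avg_def)
    thus False using c ipc by simp
  qed
  define k where "k = sqrt (ip n c c)"
  have kpos: "k > 0" and k2: "k^2 = ip n c c" using ipcpos by (auto simp: k_def)
  define m where "m = avg A (lin n c)"
  define W where "W x = (1/k) * lin n c x - m / k" for x
  have pc: "card A > 0" using fin ne by (simp add: card_gt_0_iff)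
  have sW: "(\<Sum>x\<in>A. W x) = 0"
    unfolding W_def using pc by (simp add: sum_subtractf sum_divide_distrib[symmetric] m_def avg_def)
  have "(\<Sum>x\<in>A. (W x)^2) = (\<Sum>x\<in>A. (lin n c x - m)^2) / k^2"
    unfolding W_def using kpos by (simp add: sum_divide_distrib[symmetric] power_divide diff_divide_distrib[symmetric])
  also have "(\<Sum>x\<in>A. (lin n c x - m)^2) = card A * vr A (lin n c)"
    using pc by (simp add: vr_def avg_def m_def)
  finally have eq: "(\<Sum>x\<in>A. (W x)^2) = real (card A) * (vr A (lin n c) / ip n c c)" using k2 by simp
  have "vr A (lin n c) / ip n c c > 16" using c ipcpos by (simp add: field_simps)
  hence "real (card A) * 16 < real (card A) * (vr A (lin n c) / ip n c c)"
    using pc by (intro mult_strict_left_mono) auto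
  hence big: "(\<Sum>x\<in>A. (W x)^2) > 16 * real (card A)" unfolding eq by linarith
  obtain A0 where A0: "A0 \<subseteq> A" "A0 \<noteq> {}" "A - A0 \<noteq> {}"
    "4 * Hb (card A0 / card A) \<le> (card A0 / card A) * (card (A - A0) / card A) * (avg A0 W - avg (A - A0) W)^2"
    using tail_split2[OF fin ne sW big] by blast
  define D where "D i = mn A0 i - mn (A - A0) i" for i
  have avW: "avg B W = ip n c (mn B) / k - m / k" if "finite B" "B \<noteq> {}" for B
    unfolding W_def by (simp only: avg_diff avg_cmul avg_const[OF that] avg_lin) simp
  have finA0: "finite A0" "finite (A - A0)" using A0(1) fin finite_subset by auto
  have "avg A0 W - avg (A - A0) W = ip n c D / k"
    unfolding avW[OF finA0(1) A0(2)] avW[OF finA0(2) A0(3)] D_def ip_def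
    by (simp add: diff_divide_distrib[symmetric] sum_subtractf[symmetric] algebra_simps)
  hence "(avg A0 W - avg (A - A0) W)^2 = (ip n c D)^2 / ip n c c"
    using k2 by (simp add: power_divide)
  also have "\<dots> \<le> ip n D D"
  proof -
    have "(ip n c D)^2 \<le> ip n c c * ip n D D"
      unfolding ip_def using Cauchy_Schwarz_ineq_sum[of c D "{..<n}"] by (simp add: power2_eq_square)
    thus ?thesis using ipcpos by (simp add: field_simps)
  qed
  finally have le: "(avg A0 W - avg (A - A0) W)^2 \<le> ip n D D" .
  have "(card A0 / card A) * (card (A - A0) / card A) * (avg A0 W - avg (A - A0) W)^2
        \<le> (card A0 / card A) * (card (A - A0) / card A) * ip n D D"
    by (rule mult_left_mono[OF le]) auto
  thus ?thesis using A0 unfolding D_def by (meson order_trans)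
qed

definition Vp :: "nat \<Rightarrow> (nat \<Rightarrow> real) \<Rightarrow> proto \<Rightarrow> real list set \<Rightarrow> real list set \<Rightarrow> real" where
  "Vp n s P A B = avg A (\<lambda>x. avg B (\<lambda>y. run P x y * (\<Sum>i<n. s i * x ! i * y ! i)))"

lemma avg_cong: "(\<And>x. x \<in> A \<Longrightarrow> f x = g x) \<Longrightarrow> avg A f = avg A g"
  unfolding avg_def by (metis sum.cong)

lemma Vp_splitA:
  assumes "finite A0" "finite A1" "A0 \<inter> A1 = {}"
  shows "Vp n s P (A0 \<union> A1) B = (card A0 / card (A0 \<union> A1)) * Vp n s P A0 B + (card A1 / card (A0 \<union> A1)) * Vp n s P A1 B"
  unfolding Vp_def by (rule avg_union[OF assms])

lemma Vp_splitB:
  assumes "finite B0" "finite B1" "B0 \<inter> B1 = {}"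
  shows "Vp n s P A (B0 \<union> B1) = (card B0 / card (B0 \<union> B1)) * Vp n s P A B0 + (card B1 / card (B0 \<union> B1)) * Vp n s P A B1"
  unfolding Vp_def avg_union[OF assms] by (simp only: avg_add avg_cmul)

lemma Vp_cong:
  assumes "\<And>x y. x \<in> A \<Longrightarrow> y \<in> B \<Longrightarrow> run P x y = run Q x y"
  shows "Vp n s P A B = Vp n s Q A B"
  unfolding Vp_def using assms by (intro avg_cong) simp

lemma Vp_leaf: "Vp n s (Leaf b) A B = (if b then 1 else -1) * Zf n s A B"
proof -
  have "avg B (\<lambda>y. (if b then 1 else -1) * (\<Sum>i<n. s i * x ! i * y ! i)) =
        (if b then 1 else -1) * (\<Sum>i<n. (s i * mn B i) * x ! i)" for x
    by (simp only: avg_cmul avg_sum mn_def) (simp add: ac_simps)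
  hence "Vp n s (Leaf b) A B = avg A (\<lambda>x. (if b then 1 else -1) * (\<Sum>i<n. (s i * mn B i) * x ! i))"
    unfolding Vp_def by simp
  also have "\<dots> = (if b then 1 else -1) * Zf n s A B"
    by (simp only: avg_cmul avg_sum mn_def Zf_def) (simp add: ac_simps)
  finally show ?thesis .
qed

lemma comb_num:
  fixes q0 q1 v0 v1 G0 G1 Gt k0 k1 k t :: real
  assumes q: "q0 > 0" "q1 > 0" "q0 + q1 = 1" and t: "t > 0"
    and b0: "\<bar>v0\<bar> \<le> (G0 + 64 * ln 2 * k0) / (2 * t) + t / 2"
    and b1: "\<bar>v1\<bar> \<le> (G1 + 64 * ln 2 * k1) / (2 * t) + t / 2"
    and g: "q0 * G0 + q1 * G1 + 64 * ln 2 * (q0 * k0 + q1 * k1) \<le> Gt + 64 * ln 2 * k"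
  shows "\<bar>q0 * v0 + q1 * v1\<bar> \<le> (Gt + 64 * ln 2 * k) / (2 * t) + t / 2"
proof -
  have "\<bar>q0 * v0 + q1 * v1\<bar> \<le> q0 * \<bar>v0\<bar> + q1 * \<bar>v1\<bar>"
    using q by (simp add: abs_mult order_trans[OF abs_triangle_ineq])
  also have "\<dots> \<le> q0 * ((G0 + 64 * ln 2 * k0) / (2 * t) + t / 2) + q1 * ((G1 + 64 * ln 2 * k1) / (2 * t) + t / 2)"
    using q b0 b1 by (intro add_mono mult_left_mono) auto
  also have "\<dots> = (q0 * G0 + q1 * G1 + 64 * ln 2 * (q0 * k0 + q1 * k1)) / (2 * t) + (q0 + q1) * (t / 2)"
    using t by (simp add: field_simps)
  also have "\<dots> \<le> (Gt + 64 * ln 2 * k) / (2 * t) + t / 2"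
    using g t q(3) by (simp add: divide_right_mono)
  finally show ?thesis .
qed

lemma Hb_le: assumes "0 < q" "q < 1" shows "Hb q \<le> ln 2"
proof -
  have a: "ln (1 / (2 * q)) \<le> 1 / (2 * q) - 1" using assms by (intro ln_le_minus_one) auto
  have b: "ln (1 / (2 * (1 - q))) \<le> 1 / (2 * (1 - q)) - 1" using assms by (intro ln_le_minus_one) auto
  have "q * ln (1 / (2 * q)) + (1 - q) * ln (1 / (2 * (1 - q))) \<le> q * (1 / (2 * q) - 1) + (1 - q) * (1 / (2 * (1 - q)) - 1)"
    using a b assms by (intro add_mono mult_left_mono) auto
  also have "\<dots> = 0" using assms by (simp add: field_simps)
  finally have c: "q * ln (1 / (2 * q)) + (1 - q) * ln (1 / (2 * (1 - q))) \<le> 0" .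
  have m1: "ln (2 * q) = ln 2 + ln q" by (rule ln_mult_pos) (use assms in auto)
  have m2: "ln (2 * (1 - q)) = ln 2 + ln (1 - q)" by (rule ln_mult_pos) (use assms in auto)
  have d1: "ln (1 / (2 * q)) = ln 1 - ln (2 * q)" using assms by (simp only: ln_div) simp
  have d2: "ln (1 / (2 * (1 - q))) = ln 1 - ln (2 * (1 - q))" using assms by (simp only: ln_div) simp
  have d3: "ln (1 / q) = ln 1 - ln q" using assms by (simp only: ln_div) simp
  have d4: "ln (1 / (1 - q)) = ln 1 - ln (1 - q)" using assms by (simp only: ln_div) simp
  have e1: "ln (1 / q) = ln (1 / (2 * q)) + ln 2" and e2: "ln (1 / (1 - q)) = ln (1 / (2 * (1 - q))) + ln 2"
    using m1 m2 d1 d2 d3 d4 by linarith+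
  have "Hb q = (q * ln (1 / (2 * q)) + (1 - q) * ln (1 / (2 * (1 - q)))) + ln 2"
    unfolding Hb_def e1 e2 by (simp add: algebra_simps)
  thus ?thesis using c by linarith
qed

definition Bd :: "nat \<Rightarrow> (nat \<Rightarrow> real) \<Rightarrow> real \<Rightarrow> real list set \<Rightarrow> real list set \<Rightarrow> real \<Rightarrow> real" where
  "Bd n s t A B k = (G n s A B + 64 * ln 2 * k) / (2 * t) + t / 2"

lemma Bd_mono: "t > 0 \<Longrightarrow> k \<le> k' \<Longrightarrow> Bd n s t A B k \<le> Bd n s t A B k'"
  unfolding Bd_def by (intro add_right_mono divide_right_mono) auto

lemma q_facts:
  assumes "finite B" "B0 \<subseteq> B" "B0 \<noteq> {}" "B - B0 \<noteq> {}"
  shows "card B0 / card B > 0" "card (B - B0) / card B > 0"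
    "card B0 / card B + card (B - B0) / card B = 1" "card B0 < card B" "card (B - B0) < card B"
    "B0 \<union> (B - B0) = B" "B0 \<inter> (B - B0) = {}" "finite B0" "finite (B - B0)"
proof -
  have f: "finite B0" "finite (B - B0)" using assms finite_subset by auto
  have c: "card B = card B0 + card (B - B0)"
    using assms(1,2) by (metis card_Diff_subset card_mono f(1) le_add_diff_inverse)
  have p: "card B0 > 0" "card (B - B0) > 0" using f assms by (auto simp: card_gt_0_iff)
  show "card B0 / card B > 0" "card (B - B0) / card B > 0" using p c by auto
  have "real (card B0) / card B + card (B - B0) / card B = real (card B0 + card (B - B0)) / card B"
    by (simp add: add_divide_distrib)
  thus "card B0 / card B + card (B - B0) / card B = 1" using p c by simp
  show "card B0 < card B" "card (B - B0) < card B" using p c by auto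
  show "B0 \<union> (B - B0) = B" "B0 \<inter> (B - B0) = {}" using assms by auto
  show "finite B0" "finite (B - B0)" using f by auto
qed

lemma wrap:
  assumes s: "\<forall>i<n. (s i)^2 = 1" and t: "t > 0"
   and H: "\<And>A B. A \<subseteq> cube n \<Longrightarrow> B \<subseteq> cube n \<Longrightarrow> A \<noteq> {} \<Longrightarrow> B \<noteq> {} \<Longrightarrow> clean n A \<Longrightarrow> clean n B
           \<Longrightarrow> \<bar>Vp n s P A B\<bar> \<le> Bd n s t A B (cost P)"
  shows "A \<subseteq> cube n \<Longrightarrow> B \<subseteq> cube n \<Longrightarrow> A \<noteq> {} \<Longrightarrow> B \<noteq> {} \<Longrightarrow> clean n A \<or> clean n B
           \<Longrightarrow> \<bar>Vp n s P A B\<bar> \<le> Bd n s t A B (cost P)"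
proof (induction "card A + card B" arbitrary: A B rule: less_induct)
  case less
  have finA: "finite A" using less.prems(1) finite_cube finite_subset by blast
  have finB: "finite B" using less.prems(2) finite_cube finite_subset by blast
  show ?case
  proof (cases "clean n A")
    case cA: True
    show ?thesis
    proof (cases "clean n B")
      case True thus ?thesis using H less.prems cA by blast
    next
      case False
      obtain B0 where B0: "B0 \<subseteq> B" "B0 \<noteq> {}" "B - B0 \<noteq> {}"
        "4 * Hb (card B0 / card B) \<le> (card B0 / card B) * (card (B - B0) / card B)
          * ip n (\<lambda>i. mn B0 i - mn (B - B0) i) (\<lambda>i. mn B0 i - mn (B - B0) i)"
        using unclean_split[OF finB less.prems(4) False] by blast
      note qf = q_facts[OF finB B0(1-3)]
      have ih0: "\<bar>Vp n s P A B0\<bar> \<le> Bd n s t A B0 (cost P)"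
        using less.hyps[of A B0] qf less.prems B0 cA by auto
      have ih1: "\<bar>Vp n s P A (B - B0)\<bar> \<le> Bd n s t A (B - B0) (cost P)"
        using less.hyps[of A "B - B0"] qf less.prems B0 cA by auto
      have V: "Vp n s P A B = (card B0 / card B) * Vp n s P A B0 + (card (B - B0) / card B) * Vp n s P A (B - B0)"
        using Vp_splitB[OF qf(8,9,7), of n s P A] qf(6) by simp
      have st: "(card B0 / card B) * G n s A B0 + (card (B - B0) / card B) * G n s A (B - B0) \<le> G n s A B
           - 16 * (card B0 / card B) * (card (B - B0) / card B) * ip n (\<lambda>i. mn B0 i - mn (B - B0) i) (\<lambda>i. mn B0 i - mn (B - B0) i)
           + 64 * Hb (card B0 / card B)"
        using step_B[OF qf(8,9) finA B0(2,3) less.prems(3) qf(7) cA s] qf(6) by simp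
      define q0 where "q0 = real (card B0) / card B"
      define q1 where "q1 = real (card (B - B0)) / card B"
      define X where "X = ip n (\<lambda>i. mn B0 i - mn (B - B0) i) (\<lambda>i. mn B0 i - mn (B - B0) i)"
      have e16: "16 * q0 * q1 * X = 16 * (q0 * q1 * X)" by simp
      have st': "q0 * G n s A B0 + q1 * G n s A (B - B0) \<le> G n s A B - 16 * (q0 * q1 * X) + 64 * Hb q0"
        using st unfolding q0_def[symmetric] q1_def[symmetric] X_def[symmetric] e16 .
      have hb: "4 * Hb q0 \<le> q0 * q1 * X" using B0(4) unfolding q0_def[symmetric] q1_def[symmetric] X_def[symmetric] .
      have q01: "q0 + q1 = 1" using qf(3) unfolding q0_def q1_def .
      have kk: "q0 * real (cost P) + q1 * real (cost P) = real (cost P)"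
        using q01 by (metis distrib_right mult_1)
      have g: "q0 * G n s A B0 + q1 * G n s A (B - B0) + 64 * ln 2 * (q0 * real (cost P) + q1 * real (cost P))
               \<le> G n s A B + 64 * ln 2 * real (cost P)"
        unfolding kk using st' hb by linarith
      have V': "Vp n s P A B = q0 * Vp n s P A B0 + q1 * Vp n s P A (B - B0)" using V unfolding q0_def q1_def .
      show ?thesis unfolding V' Bd_def
        by (rule comb_num[OF qf(1,2,3)[folded q0_def q1_def] t ih0[unfolded Bd_def] ih1[unfolded Bd_def] g])
    qed
  next
    case False
    hence cB: "clean n B" using less.prems(5) by blast
    obtain A0 where A0: "A0 \<subseteq> A" "A0 \<noteq> {}" "A - A0 \<noteq> {}"
      "4 * Hb (card A0 / card A) \<le> (card A0 / card A) * (card (A - A0) / card A)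
        * ip n (\<lambda>i. mn A0 i - mn (A - A0) i) (\<lambda>i. mn A0 i - mn (A - A0) i)"
      using unclean_split[OF finA less.prems(3) False] by blast
    note qf = q_facts[OF finA A0(1-3)]
    have ih0: "\<bar>Vp n s P A0 B\<bar> \<le> Bd n s t A0 B (cost P)"
      using less.hyps[of A0 B] qf less.prems A0 cB by auto
    have ih1: "\<bar>Vp n s P (A - A0) B\<bar> \<le> Bd n s t (A - A0) B (cost P)"
      using less.hyps[of "A - A0" B] qf less.prems A0 cB by auto
    have V: "Vp n s P A B = (card A0 / card A) * Vp n s P A0 B + (card (A - A0) / card A) * Vp n s P (A - A0) B"
      using Vp_splitA[OF qf(8,9,7), of n s P B] qf(6) by simp
    have st: "(card A0 / card A) * G n s A0 B + (card (A - A0) / card A) * G n s (A - A0) B \<le> G n s A B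
         - 16 * (card A0 / card A) * (card (A - A0) / card A) * ip n (\<lambda>i. mn A0 i - mn (A - A0) i) (\<lambda>i. mn A0 i - mn (A - A0) i)
         + 64 * Hb (card A0 / card A)"
      using step_A[OF qf(8,9) finB A0(2,3) less.prems(4) qf(7) cB s] qf(6) by simp
    define q0 where "q0 = real (card A0) / card A"
    define q1 where "q1 = real (card (A - A0)) / card A"
    define X where "X = ip n (\<lambda>i. mn A0 i - mn (A - A0) i) (\<lambda>i. mn A0 i - mn (A - A0) i)"
    have e16: "16 * q0 * q1 * X = 16 * (q0 * q1 * X)" by simp
    have st': "q0 * G n s A0 B + q1 * G n s (A - A0) B \<le> G n s A B - 16 * (q0 * q1 * X) + 64 * Hb q0"
      using st unfolding q0_def[symmetric] q1_def[symmetric] X_def[symmetric] e16 .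
    have hb: "4 * Hb q0 \<le> q0 * q1 * X" using A0(4) unfolding q0_def[symmetric] q1_def[symmetric] X_def[symmetric] .
    have q01: "q0 + q1 = 1" using qf(3) unfolding q0_def q1_def .
    have kk: "q0 * real (cost P) + q1 * real (cost P) = real (cost P)"
      using q01 by (metis distrib_right mult_1)
    have g: "q0 * G n s A0 B + q1 * G n s (A - A0) B + 64 * ln 2 * (q0 * real (cost P) + q1 * real (cost P))
             \<le> G n s A B + 64 * ln 2 * real (cost P)"
      unfolding kk using st' hb by linarith
    have V': "Vp n s P A B = q0 * Vp n s P A0 B + q1 * Vp n s P (A - A0) B" using V unfolding q0_def q1_def .
    show ?thesis unfolding V' Bd_def
      by (rule comb_num[OF qf(1,2,3)[folded q0_def q1_def] t ih0[unfolded Bd_def] ih1[unfolded Bd_def] g])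
  qed
qed

lemma orig_num:
  fixes q0 q1 G0 G1 Gt X k0 k1 k :: real
  assumes "q0 > 0" "q1 > 0" "q0 + q1 = 1" "q0 * G0 + q1 * G1 \<le> Gt - 16 * q0 * q1 * X + 64 * Hb q0"
    "X \<ge> 0" "Hb q0 \<le> ln 2" "k0 + 1 \<le> k" "k1 + 1 \<le> k"
  shows "q0 * G0 + q1 * G1 + 64 * ln 2 * (q0 * k0 + q1 * k1) \<le> Gt + 64 * ln 2 * k"
proof -
  have "q0 * k0 + q1 * k1 \<le> q0 * (k - 1) + q1 * (k - 1)"
    using assms by (intro add_mono mult_left_mono) auto
  also have "\<dots> = k - 1" unfolding distrib_right[symmetric] assms(3) by simp
  finally have a: "q0 * k0 + q1 * k1 \<le> k - 1" .
  have "64 * ln 2 * (q0 * k0 + q1 * k1) \<le> 64 * ln 2 * (k - 1)"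
    using a by (intro mult_left_mono) auto
  moreover have "16 * q0 * q1 * X \<ge> 0" using assms by simp
  ultimately show ?thesis using assms(4,6) by (simp add: algebra_simps)
qed

lemma ip_self_nonneg: "ip n D D \<ge> 0"
  unfolding ip_def by (intro sum_nonneg) auto

lemma main_ind:
  assumes s: "\<forall>i<n. (s i)^2 = 1" and t: "t > 0"
  shows "A \<subseteq> cube n \<Longrightarrow> B \<subseteq> cube n \<Longrightarrow> A \<noteq> {} \<Longrightarrow> B \<noteq> {} \<Longrightarrow> clean n A \<or> clean n B
           \<Longrightarrow> \<bar>Vp n s P A B\<bar> \<le> Bd n s t A B (cost P)"
proof (induction P arbitrary: A B)
  case (Leaf b)
  define Z where "Z = Zf n s A B"
  have V: "\<bar>Vp n s (Leaf b) A B\<bar> = \<bar>Z\<bar>" unfolding Vp_leaf Z_def by (simp add: abs_mult)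
  have l1: "nq n A \<le> 2 * Lg n A" "nq n B \<le> 2 * Lg n B" using level1 Leaf.prems by auto
  have "Phi n s A B \<ge> 0" "Phi n s B A \<ge> 0" unfolding Phi_def by (auto intro: vr_nonneg)
  hence GZ: "G n s A B \<ge> Z^2" unfolding G_def Z_def using l1 by (smt (verit))
  have "0 \<le> (\<bar>Z\<bar> - t)^2" by simp
  hence "2 * t * \<bar>Z\<bar> \<le> Z^2 + t^2" by (simp add: power2_eq_square algebra_simps)
  hence "\<bar>Z\<bar> \<le> (Z^2 + t^2) / (2 * t)" using t by (simp add: field_simps)
  also have "\<dots> = Z^2 / (2 * t) + t / 2" using t by (simp add: field_simps power2_eq_square)
  also have "\<dots> \<le> G n s A B / (2 * t) + t / 2" using GZ t by (intro add_right_mono divide_right_mono) auto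
  finally show ?case unfolding V Bd_def by simp
next
  case (ANode f l r)
  show ?case
  proof (rule wrap[OF s t _ ANode.prems])
    fix A B assume hA: "A \<subseteq> cube n" and hB: "B \<subseteq> cube n" and neA: "A \<noteq> {}" and neB: "B \<noteq> {}"
      and cA: "clean n A" and cB: "clean n B"
    have finA: "finite A" using hA finite_cube finite_subset by blast
    have finB: "finite B" using hB finite_cube finite_subset by blast
    define A0 where "A0 = {x\<in>A. f x}"
    have c: "real (cost l) + 1 \<le> real (cost (ANode f l r))" "real (cost r) + 1 \<le> real (cost (ANode f l r))"
      by auto
    show "\<bar>Vp n s (ANode f l r) A B\<bar> \<le> Bd n s t A B (cost (ANode f l r))"
    proof (cases "A - A0 = {}")
      case True
      hence "Vp n s (ANode f l r) A B = Vp n s l A B" by (intro Vp_cong) (auto simp: A0_def)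
      moreover have "\<bar>Vp n s l A B\<bar> \<le> Bd n s t A B (cost l)" using ANode.IH(1) hA hB neA neB cA by blast
      moreover have "Bd n s t A B (cost l) \<le> Bd n s t A B (cost (ANode f l r))" using c t by (intro Bd_mono) auto
      ultimately show ?thesis by simp
    next
      case F1: False
      show ?thesis
      proof (cases "A0 = {}")
        case True
        hence "Vp n s (ANode f l r) A B = Vp n s r A B" by (intro Vp_cong) (auto simp: A0_def)
        moreover have "\<bar>Vp n s r A B\<bar> \<le> Bd n s t A B (cost r)" using ANode.IH(2) hA hB neA neB cA by blast
        moreover have "Bd n s t A B (cost r) \<le> Bd n s t A B (cost (ANode f l r))" using c t by (intro Bd_mono) auto
        ultimately show ?thesis by simp
      next
        case F0: False
        have sub: "A0 \<subseteq> A" by (auto simp: A0_def)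
        note qf = q_facts[OF finA sub F0 F1]
        define q0 where "q0 = real (card A0) / card A"
        define q1 where "q1 = real (card (A - A0)) / card A"
        have V: "Vp n s (ANode f l r) A B = q0 * Vp n s l A0 B + q1 * Vp n s r (A - A0) B"
        proof -
          have "Vp n s (ANode f l r) A B = q0 * Vp n s (ANode f l r) A0 B + q1 * Vp n s (ANode f l r) (A - A0) B"
            using Vp_splitA[OF qf(8,9,7), of n s "ANode f l r" B] qf(6) by (simp add: q0_def q1_def)
          moreover have "Vp n s (ANode f l r) A0 B = Vp n s l A0 B" by (intro Vp_cong) (auto simp: A0_def)
          moreover have "Vp n s (ANode f l r) (A - A0) B = Vp n s r (A - A0) B" by (intro Vp_cong) (auto simp: A0_def)
          ultimately show ?thesis by simp
        qed
        have ih0: "\<bar>Vp n s l A0 B\<bar> \<le> Bd n s t A0 B (cost l)"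
          using ANode.IH(1)[of A0 B] sub hA hB F0 neB cB by blast
        have ih1: "\<bar>Vp n s r (A - A0) B\<bar> \<le> Bd n s t (A - A0) B (cost r)"
          using ANode.IH(2)[of "A - A0" B] hA hB F1 neB cB by blast
        have st: "q0 * G n s A0 B + q1 * G n s (A - A0) B \<le> G n s A B
           - 16 * q0 * q1 * ip n (\<lambda>i. mn A0 i - mn (A - A0) i) (\<lambda>i. mn A0 i - mn (A - A0) i) + 64 * Hb q0"
          using step_A[OF qf(8,9) finB F0 F1 neB qf(7) cB s] qf(6) by (simp add: q0_def q1_def)
        have qq: "q0 > 0" "q1 > 0" "q0 + q1 = 1" using qf(1,2,3) by (simp_all add: q0_def q1_def)
        have hb: "Hb q0 \<le> ln 2" using qq by (intro Hb_le) auto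
        have g: "q0 * G n s A0 B + q1 * G n s (A - A0) B + 64 * ln 2 * (q0 * real (cost l) + q1 * real (cost r))
                 \<le> G n s A B + 64 * ln 2 * real (cost (ANode f l r))"
          by (rule orig_num[OF qq st ip_self_nonneg hb c])
        show ?thesis unfolding V Bd_def
          by (rule comb_num[OF qq t ih0[unfolded Bd_def] ih1[unfolded Bd_def] g])
      qed
    qed
  qed
next
  case (BNode f l r)
  show ?case
  proof (rule wrap[OF s t _ BNode.prems])
    fix A B assume hA: "A \<subseteq> cube n" and hB: "B \<subseteq> cube n" and neA: "A \<noteq> {}" and neB: "B \<noteq> {}"
      and cA: "clean n A" and cB: "clean n B"
    have finA: "finite A" using hA finite_cube finite_subset by blast
    have finB: "finite B" using hB finite_cube finite_subset by blast
    define B0 where "B0 = {y\<in>B. f y}"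
    have c: "real (cost l) + 1 \<le> real (cost (BNode f l r))" "real (cost r) + 1 \<le> real (cost (BNode f l r))"
      by auto
    show "\<bar>Vp n s (BNode f l r) A B\<bar> \<le> Bd n s t A B (cost (BNode f l r))"
    proof (cases "B - B0 = {}")
      case True
      hence "Vp n s (BNode f l r) A B = Vp n s l A B" by (intro Vp_cong) (auto simp: B0_def)
      moreover have "\<bar>Vp n s l A B\<bar> \<le> Bd n s t A B (cost l)" using BNode.IH(1) hA hB neA neB cA by blast
      moreover have "Bd n s t A B (cost l) \<le> Bd n s t A B (cost (BNode f l r))" using c t by (intro Bd_mono) auto
      ultimately show ?thesis by simp
    next
      case F1: False
      show ?thesis
      proof (cases "B0 = {}")
        case True
        hence "Vp n s (BNode f l r) A B = Vp n s r A B" by (intro Vp_cong) (auto simp: B0_def)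
        moreover have "\<bar>Vp n s r A B\<bar> \<le> Bd n s t A B (cost r)" using BNode.IH(2) hA hB neA neB cA by blast
        moreover have "Bd n s t A B (cost r) \<le> Bd n s t A B (cost (BNode f l r))" using c t by (intro Bd_mono) auto
        ultimately show ?thesis by simp
      next
        case F0: False
        have sub: "B0 \<subseteq> B" by (auto simp: B0_def)
        note qf = q_facts[OF finB sub F0 F1]
        define q0 where "q0 = real (card B0) / card B"
        define q1 where "q1 = real (card (B - B0)) / card B"
        have V: "Vp n s (BNode f l r) A B = q0 * Vp n s l A B0 + q1 * Vp n s r A (B - B0)"
        proof -
          have "Vp n s (BNode f l r) A B = q0 * Vp n s (BNode f l r) A B0 + q1 * Vp n s (BNode f l r) A (B - B0)"
            using Vp_splitB[OF qf(8,9,7), of n s "BNode f l r" A] qf(6) by (simp add: q0_def q1_def)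
          moreover have "Vp n s (BNode f l r) A B0 = Vp n s l A B0" by (intro Vp_cong) (auto simp: B0_def)
          moreover have "Vp n s (BNode f l r) A (B - B0) = Vp n s r A (B - B0)" by (intro Vp_cong) (auto simp: B0_def)
          ultimately show ?thesis by simp
        qed
        have ih0: "\<bar>Vp n s l A B0\<bar> \<le> Bd n s t A B0 (cost l)"
          using BNode.IH(1)[of A B0] sub hA hB F0 neA cA by blast
        have ih1: "\<bar>Vp n s r A (B - B0)\<bar> \<le> Bd n s t A (B - B0) (cost r)"
          using BNode.IH(2)[of A "B - B0"] hA hB F1 neA cA by blast
        have st: "q0 * G n s A B0 + q1 * G n s A (B - B0) \<le> G n s A B
           - 16 * q0 * q1 * ip n (\<lambda>i. mn B0 i - mn (B - B0) i) (\<lambda>i. mn B0 i - mn (B - B0) i) + 64 * Hb q0"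
          using step_B[OF qf(8,9) finA F0 F1 neA qf(7) cA s] qf(6) by (simp add: q0_def q1_def)
        have qq: "q0 > 0" "q1 > 0" "q0 + q1 = 1" using qf(1,2,3) by (simp_all add: q0_def q1_def)
        have hb: "Hb q0 \<le> ln 2" using qq by (intro Hb_le) auto
        have g: "q0 * G n s A B0 + q1 * G n s A (B - B0) + 64 * ln 2 * (q0 * real (cost l) + q1 * real (cost r))
                 \<le> G n s A B + 64 * ln 2 * real (cost (BNode f l r))"
          by (rule orig_num[OF qq st ip_self_nonneg hb c])
        show ?thesis unfolding V Bd_def
          by (rule comb_num[OF qq t ih0[unfolded Bd_def] ih1[unfolded Bd_def] g])
      qed
    qed
  qed
qed

lemma cube_sum_nth: "i < n \<Longrightarrow> (\<Sum>x\<in>cube n. x ! i) = 0"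
proof -
  assume i: "i < n"
  have "(\<Sum>x\<in>cube n. x ! i) = (\<Sum>x\<in>cube n. \<Prod>j<n. (\<lambda>j v. if j = i then v else 1) j (x ! j))"
    using i by (intro sum.cong refl) (simp add: prod.If_cases Int_absorb1 Collect_conj_eq lessThan_def)
  also have "\<dots> = (\<Prod>j<n. (if j = i then 1 else 1) + (if j = i then -1 else 1 :: real))"
    by (subst cube_prod) simp
  also have "\<dots> = 0" using i by (intro prod_zero) auto
  finally show ?thesis .
qed

lemma cube_sum_nth2: "i < n \<Longrightarrow> j < n \<Longrightarrow> (\<Sum>x\<in>cube n. x ! i * x ! j) = (if i = j then 2 ^ n else 0)"
proof -
  assume i: "i < n" and j: "j < n"
  show ?thesis
  proof (cases "i = j")
    case True
    have "(\<Sum>x\<in>cube n. x ! i * x ! j) = (\<Sum>x\<in>cube n. 1)"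
      using True i by (intro sum.cong refl) (simp add: cube_nth_sq[symmetric] power2_eq_square)
    thus ?thesis using True by (simp add: card_cube)
  next
    case False
    have "(\<Sum>x\<in>cube n. x ! i * x ! j) = (\<Sum>x\<in>cube n. \<Prod>k<n. (\<lambda>k v. (if k = i then v else 1) * (if k = j then v else 1)) k (x ! k))"
    proof (intro sum.cong refl)
      fix x
      have "(\<Prod>k<n. (if k = i then x ! k else 1) * (if k = j then x ! k else 1)) =
            (\<Prod>k<n. (if k = i then x ! k else 1)) * (\<Prod>k<n. (if k = j then x ! k else 1))"
        by (rule prod.distrib)
      also have "\<dots> = x ! i * x ! j" using i j by (simp add: prod.delta')
      finally show "x ! i * x ! j = (\<Prod>k<n. (\<lambda>k v. (if k = i then v else 1) * (if k = j then v else 1)) k (x ! k))"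
        by simp
    qed
    also have "\<dots> = (\<Prod>k<n. (if k = i then 1 else 1) * (if k = j then 1 else 1) + (if k = i then -1 else 1) * (if k = j then -1 else 1 :: real))"
      by (subst cube_prod) simp
    also have "\<dots> = 0" using i False by (intro prod_zero) auto
    finally show ?thesis using False by simp
  qed
qed

lemma mn_cube: "i < n \<Longrightarrow> mn (cube n) i = 0"
  by (simp add: mn_def avg_def cube_sum_nth)

lemma clean_cube: "clean n (cube n)"
  unfolding clean_def
proof
  fix c
  have ne: "cube n \<noteq> {}" using card_cube[of n] by auto
  have "avg (cube n) (\<lambda>x. (lin n c x)^2) = ip n c c"
  proof -
    have "(\<Sum>x\<in>cube n. (lin n c x)^2) = (\<Sum>x\<in>cube n. \<Sum>i<n. \<Sum>j<n. c i * c j * (x ! i * x ! j))"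
      unfolding lin_def power2_eq_square sum_product by (simp add: algebra_simps)
    also have "\<dots> = (\<Sum>i<n. \<Sum>j<n. c i * c j * (\<Sum>x\<in>cube n. x ! i * x ! j))"
      by (simp add: sum.swap[of _ "cube n"] sum_distrib_left)
    also have "\<dots> = (\<Sum>i<n. \<Sum>j<n. c i * c j * (if i = j then 2 ^ n else 0))"
      by (intro sum.cong refl) (simp add: cube_sum_nth2)
    also have "\<dots> = (\<Sum>i<n. c i * c i * 2 ^ n)"
      by (intro sum.cong refl) (simp add: if_distrib[of "\<lambda>v. c _ * c _ * v"] sum.delta cong: if_cong)
    finally show ?thesis by (simp add: avg_def card_cube ip_def sum_distrib_right[symmetric])
  qed
  moreover have "vr (cube n) (lin n c) \<le> avg (cube n) (\<lambda>x. (lin n c x)^2)"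
    using vr_alt[OF finite_cube ne] by simp
  moreover have "ip n c c \<ge> 0" by (rule ip_self_nonneg)
  ultimately show "vr (cube n) (lin n c) \<le> 16 * ip n c c" by linarith
qed

lemma G_cube: "G n s (cube n) (cube n) = 0"
proof -
  have z: "(\<Sum>i<n. f i * mn (cube n) i) = 0" for f :: "nat \<Rightarrow> real"
    by (intro sum.neutral) (simp add: mn_cube)
  have l: "lin n (\<lambda>i. s i * mn (cube n) i) = (\<lambda>x. 0)"
    unfolding lin_def by (simp add: fun_eq_iff mn_cube)
  have Z: "Zf n s (cube n) (cube n) = 0" unfolding Zf_def by (intro sum.neutral) (simp add: mn_cube)
  have P: "Phi n s (cube n) (cube n) = 0" unfolding Phi_def l by (simp add: vr_def avg_def)
  have N: "nq n (cube n) = 0" unfolding nq_def ip_def by (intro sum.neutral) (simp add: mn_cube)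
  have L: "Lg n (cube n) = 0" unfolding Lg_def card_cube by simp
  show ?thesis unfolding G_def Z P N L by simp
qed

lemma emul_length: "length (emul x y) = min (length x) (length y)"
  by (simp add: emul_def)

lemma emul_nth: "i < length x \<Longrightarrow> i < length y \<Longrightarrow> emul x y ! i = x ! i * y ! i"
  by (simp add: emul_def)

lemma emul_cube: "x \<in> cube n \<Longrightarrow> y \<in> cube n \<Longrightarrow> emul x y \<in> cube n"
proof -
  assume x: "x \<in> cube n" and y: "y \<in> cube n"
  have lx: "length x = n" and ly: "length y = n" using x y by (auto simp: cube_def)
  have "set (emul x y) \<subseteq> {-1, 1}"
  proof
    fix v assume "v \<in> set (emul x y)"
    then obtain i where i: "i < length (emul x y)" "v = emul x y ! i" by (auto simp: in_set_conv_nth)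
    hence "i < n" using lx ly by (simp add: emul_length)
    hence "v = x ! i * y ! i" using i lx ly by (simp add: emul_nth)
    thus "v \<in> {-1, 1}" using cube_nth[OF x \<open>i < n\<close>] cube_nth[OF y \<open>i < n\<close>] by auto
  qed
  thus ?thesis using lx ly by (simp add: cube_def emul_length)
qed

lemma emul_inv: "x \<in> cube n \<Longrightarrow> z \<in> cube n \<Longrightarrow> emul x (emul x z) = z"
proof -
  assume x: "x \<in> cube n" and z: "z \<in> cube n"
  have lx: "length x = n" and lz: "length z = n" using x z by (auto simp: cube_def)
  show ?thesis
  proof (rule nth_equalityI)
    show "length (emul x (emul x z)) = length z" using lx lz by (simp add: emul_length)
    fix i assume "i < length (emul x (emul x z))"
    hence i: "i < n" using lx lz by (simp add: emul_length)
    have "emul x (emul x z) ! i = x ! i * (x ! i * z ! i)"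
      using i lx lz by (simp add: emul_nth emul_length)
    also have "\<dots> = (x ! i)^2 * z ! i" by (simp add: power2_eq_square)
    also have "\<dots> = z ! i" using cube_nth_sq[OF x i] by simp
    finally show "emul x (emul x z) ! i = z ! i" .
  qed
qed

lemma emul_bij: "x \<in> cube n \<Longrightarrow> bij_betw (emul x) (cube n) (cube n)"
  by (rule bij_betw_byWitness[where f'="emul x"]) (auto simp: emul_inv emul_cube)

lemma fiber_val:
  assumes z: "z \<in> cube n"
  shows "xor_fiber n C z = (\<Sum>x\<in>cube n. C x (emul x z)) / 2 ^ n"
proof -
  define Pz where "Pz = {(x, y). x \<in> cube n \<and> y \<in> cube n \<and> emul x y = z}"
  have Pz: "Pz = (\<lambda>x. (x, emul x z)) ` cube n"
  proof
    show "Pz \<subseteq> (\<lambda>x. (x, emul x z)) ` cube n"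
    proof
      fix p assume "p \<in> Pz"
      then obtain x y where p: "p = (x, y)" "x \<in> cube n" "y \<in> cube n" "emul x y = z" by (auto simp: Pz_def)
      hence "y = emul x z" using emul_inv[of x n y] by simp
      thus "p \<in> (\<lambda>x. (x, emul x z)) ` cube n" using p by auto
    qed
    show "(\<lambda>x. (x, emul x z)) ` cube n \<subseteq> Pz"
      using z by (auto simp: Pz_def emul_inv emul_cube)
  qed
  have inj: "inj_on (\<lambda>x. (x, emul x z)) (cube n)" by (auto simp: inj_on_def)
  have "(\<Sum>(x, y)\<in>Pz. C x y) = (\<Sum>x\<in>cube n. C x (emul x z))"
    unfolding Pz by (subst sum.reindex[OF inj]) simp
  moreover have "card Pz = 2 ^ n" unfolding Pz using card_image[OF inj] card_cube by simp
  ultimately show ?thesis unfolding xor_fiber_def Pz_def[symmetric] Let_def by simp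
qed

lemma fourier_val:
  assumes i: "i < n"
  shows "fourier n (xor_fiber n C) {i} = (\<Sum>x\<in>cube n. \<Sum>y\<in>cube n. C x y * (x ! i * y ! i)) / 2 ^ n / 2 ^ n"
proof -
  have "(\<Sum>z\<in>cube n. xor_fiber n C z * (\<Prod>j\<in>{i}. z ! j)) = (\<Sum>z\<in>cube n. (\<Sum>x\<in>cube n. C x (emul x z) * z ! i)) / 2 ^ n"
    by (simp add: fiber_val sum_divide_distrib sum_distrib_right)
  also have "\<dots> = (\<Sum>x\<in>cube n. \<Sum>z\<in>cube n. C x (emul x z) * z ! i) / 2 ^ n"
    by (subst sum.swap) simp
  also have "(\<Sum>x\<in>cube n. \<Sum>z\<in>cube n. C x (emul x z) * z ! i) = (\<Sum>x\<in>cube n. \<Sum>y\<in>cube n. C x y * (x ! i * y ! i))"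
  proof (rule sum.cong[OF refl])
    fix x assume x: "x \<in> cube n"
    have "(\<Sum>z\<in>cube n. C x (emul x z) * z ! i) = (\<Sum>y\<in>cube n. C x (emul x (emul x y)) * emul x y ! i)"
      using sum.reindex_bij_betw[OF emul_bij[OF x], of "\<lambda>z. C x (emul x z) * z ! i"] by simp
    also have "\<dots> = (\<Sum>y\<in>cube n. C x y * (x ! i * y ! i))"
    proof (intro sum.cong refl)
      fix y assume y: "y \<in> cube n"
      have "length x = n" "length y = n" using x y by (auto simp: cube_def)
      thus "C x (emul x (emul x y)) * emul x y ! i = C x y * (x ! i * y ! i)"
        using emul_inv[OF x y] i by (simp add: emul_nth)
    qed
    finally show "(\<Sum>z\<in>cube n. C x (emul x z) * z ! i) = (\<Sum>y\<in>cube n. C x y * (x ! i * y ! i))" .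
  qed
  finally show ?thesis unfolding fourier_def by simp
qed

lemma L1k_1: "L1k n 1 f = (\<Sum>i<n. \<bar>fourier n f {i}\<bar>)"
proof -
  have S: "{S. S \<subseteq> {0..<n} \<and> card S = 1} = (\<lambda>i. {i}) ` {..<n}"
    by (auto simp: card_1_singleton_iff image_iff lessThan_atLeast0)
  have inj: "inj_on (\<lambda>i. {i}) {..<n}" by (auto simp: inj_on_def)
  show ?thesis unfolding L1k_def S by (subst sum.reindex[OF inj]) simp
qed

theorem theorem1p2:
  "\<exists>C::real. C > 0 \<and>
     (\<forall>n d (P::proto). n \<ge> 1 \<longrightarrow> d \<ge> 1 \<longrightarrow> cost P \<le> d \<longrightarrow>
        L1k n 1 (xor_fiber n (run P)) \<le> C * sqrt (real d))"
proof (intro exI[of _ 8] conjI allI impI)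
  show "(8::real) > 0" by simp
  fix n d :: nat and P :: proto
  assume n: "n \<ge> 1" and d: "d \<ge> 1" and c: "cost P \<le> d"
  define F where "F i = avg (cube n) (\<lambda>x. avg (cube n) (\<lambda>y. run P x y * (x ! i * y ! i)))" for i
  define s where "s i = (if F i \<ge> 0 then 1 else -1 :: real)" for i
  have s1: "\<forall>i<n. (s i)^2 = 1" by (simp add: s_def)
  have FF: "fourier n (xor_fiber n (run P)) {i} = F i" if "i < n" for i
    unfolding fourier_val[OF that] F_def avg_def card_cube by (simp add: sum_divide_distrib)
  have L: "L1k n 1 (xor_fiber n (run P)) = (\<Sum>i<n. s i * F i)"
    unfolding L1k_1 by (intro sum.cong refl) (simp add: FF s_def abs_if)
  have V: "Vp n s P (cube n) (cube n) = (\<Sum>i<n. s i * F i)"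
  proof -
    have "Vp n s P (cube n) (cube n) = avg (cube n) (\<lambda>x. avg (cube n) (\<lambda>y. \<Sum>i<n. s i * (run P x y * (x ! i * y ! i))))"
      unfolding Vp_def by (simp add: sum_distrib_left ac_simps)
    also have "\<dots> = avg (cube n) (\<lambda>x. \<Sum>i<n. s i * avg (cube n) (\<lambda>y. run P x y * (x ! i * y ! i)))"
      by (simp only: avg_sum avg_cmul)
    also have "\<dots> = (\<Sum>i<n. s i * F i)"
      unfolding F_def by (simp only: avg_sum avg_cmul)
    finally show ?thesis .
  qed
  define t where "t = 8 * sqrt (real d)"
  have sd: "sqrt (real d) > 0" using d by simp
  have t: "t > 0" using sd by (simp add: t_def)
  have ne: "cube n \<noteq> {}" using card_cube[of n] by auto
  have B: "\<bar>Vp n s P (cube n) (cube n)\<bar> \<le> Bd n s t (cube n) (cube n) (cost P)"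
    by (rule main_ind[OF s1 t]) (auto simp: ne clean_cube)
  have ln2: "ln (2::real) \<le> 1" using ln_le_minus_one[of 2] by simp
  have "Bd n s t (cube n) (cube n) (cost P) = 4 * ln 2 * real (cost P) / sqrt (real d) + 4 * sqrt (real d)"
    unfolding Bd_def G_cube t_def using sd by (simp add: field_simps)
  also have "\<dots> \<le> 4 * 1 * real d / sqrt (real d) + 4 * sqrt (real d)"
    using ln2 c sd by (intro add_right_mono divide_right_mono mult_mono) auto
  also have "\<dots> = 8 * sqrt (real d)"
  proof -
    have "real d / sqrt (real d) = sqrt (real d)" by (rule real_div_sqrt) simp
    moreover have "4 * 1 * real d / sqrt (real d) = 4 * (real d / sqrt (real d))" by simp
    ultimately show ?thesis by simp
  qed
  finally show "L1k n 1 (xor_fiber n (run P)) \<le> 8 * sqrt (real d)"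
    using B L V by linarith
qed

end
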